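(* In the setting of the context, for every $N\in\mathcal N$: (1) $N^e=\{u\in D: f(d^\ast ud)\in N \text{ for every } d\in D\}$; (2) $N^{ec}=\bigcap_{\sigma\in G}N_\sigma$; (3) $(N_\sigma)^e=N^e$ for every $\sigma\in G$; (4) $N^{ece}=N^e$. For every $M\in\mathcal M$: (5) $(M^c)_\sigma=M^c$ for every $\sigma\in G$; (6) $M^{cec}=M^c$.
   Context: Let $K/F$ be a finite Galois extension of fields of characteristic $0$ with Galois group $G$, $n=|G|$; write $k^\sigma$ for the image of $k$ under $\sigma$. Let $\Phi$ be a normalized $2$-cocycle and $D=(K/F,\Phi)$ the crossed product: right $K$-vector space with basis $(e_\sigma)_{\sigma\in G}$, $e_{\mathrm{id}}=1$, multiplication $(\sum e_\sigma c_\sigma)(\sum e_\tau d_\tau)=\sum e_{\sigma\tau}\Phi(\sigma,\tau)c_\sigma^\tau d_\tau$. Assume $D$ is a division algebra and $\ast$ an involution on $D$ with $K^\ast\subseteq K$. A unital hermitian cone on a ring $R$ with involution $\ast$ is a subset $M\subseteq\{r:r^\ast=r\}$ with $1\in M$, $M+M\subseteq M$, $aMa^\ast\subseteq M$ for all $a\in R$, $M\cap-M=\{0\}$. Assume $a_\sigma:=e_\sigma^\ast e_\sigma\in K$ for all $\sigma$, and let $\mathcal N$ be the set of unital hermitian cones on $(K,\ast)$ containing all $a_\sigma$; assume $\mathcal N\neq\emptyset$. For $N\in\mathcal N$, $N_\sigma=\{k\in K: a_\sigma k^\sigma\in N\}$. Let $\mathcal M$ be the set of unital hermitian cones on $(D,\ast)$.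 Define $f\colon D\to K$ by $f(\sum e_\sigma c_\sigma)=c_{\mathrm{id}}$, and $\lambda\colon D\to M_n(K)$ by $ae_\tau=\sum_\sigma e_\sigma\lambda(a)_{\sigma\tau}$. Let $A=\mathrm{diag}(a_\sigma)_{\sigma\in G}$. For $M\in\mathcal M$ put $M^c=M\cap K$, and for $N\in\mathcal N$ put $N^e=\{c\in D: x^\ast A\lambda(c)x\in N\text{ for every column vector } x\in K^n\}$, where $x^\ast$ is the row vector of the $\ast$-images of the entries of $x$. (Then $M^c\in\mathcal N$ and $N^e\in\mathcal M$.) Compositions are written as superscripts, e.g. $N^{ec}=(N^e)^c$. *)

theory Defs
  imports Main
begin

text \<open>K is the whole type 'k (a field of characteristic 0); G is a finite group of
field automorphisms of K, and F is its fixed field (so K/F is finite Galois with group G,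
by Artin's theorem). We write k^sigma = sigma k. The group law of G is chosen so that
k^(sigma tau) = (k^sigma)^tau, i.e. gmul sigma tau = tau o sigma.\<close>

definition gmul :: "('k \<Rightarrow> 'k) \<Rightarrow> ('k \<Rightarrow> 'k) \<Rightarrow> ('k \<Rightarrow> 'k)" where
  "gmul \<sigma> \<tau> = \<tau> \<circ> \<sigma>"

definition fixed_field :: "('k::field \<Rightarrow> 'k) set \<Rightarrow> 'k set" where
  "fixed_field G = {x. \<forall>\<sigma>\<in>G. \<sigma> x = x}"

definition galois_group :: "('k::field \<Rightarrow> 'k) set \<Rightarrow> bool" where
  "galois_group G \<longleftrightarrow> finite G \<and> id \<in> G \<and>
     (\<forall>\<sigma>\<in>G. \<forall>\<tau>\<in>G. gmul \<sigma> \<tau> \<in> G) \<and>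
     (\<forall>\<sigma>\<in>G. bij \<sigma> \<and> inv \<sigma> \<in> G \<and> \<sigma> 1 = 1 \<and>
        (\<forall>x y. \<sigma> (x + y) = \<sigma> x + \<sigma> y \<and> \<sigma> (x * y) = \<sigma> x * \<sigma> y))"

definition normalized_cocycle ::
  "('k::field \<Rightarrow> 'k) set \<Rightarrow> (('k \<Rightarrow> 'k) \<Rightarrow> ('k \<Rightarrow> 'k) \<Rightarrow> 'k) \<Rightarrow> bool" where
  "normalized_cocycle G \<Phi> \<longleftrightarrow>
     (\<forall>\<sigma>\<in>G. \<forall>\<tau>\<in>G. \<Phi> \<sigma> \<tau> \<noteq> 0) \<and>
     (\<forall>\<sigma>\<in>G. \<Phi> id \<sigma> = 1 \<and> \<Phi> \<sigma> id = 1) \<and>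
     (\<forall>\<sigma>\<in>G. \<forall>\<tau>\<in>G. \<forall>\<rho>\<in>G.
        \<Phi> (gmul \<sigma> \<tau>) \<rho> * \<rho> (\<Phi> \<sigma> \<tau>) = \<Phi> \<sigma> (gmul \<tau> \<rho>) * \<Phi> \<tau> \<rho>)"

text \<open>An element sum e_sigma c_sigma of D is represented by its coefficient function
c : G -> K (extended by 0 outside G).\<close>

type_synonym 'k dvec = "('k \<Rightarrow> 'k) \<Rightarrow> 'k"

definition Dset :: "('k::field \<Rightarrow> 'k) set \<Rightarrow> 'k dvec set" where
  "Dset G = {c. \<forall>\<sigma>. \<sigma> \<notin> G \<longrightarrow> c \<sigma> = 0}"

definition dadd :: "'k::field dvec \<Rightarrow> 'k dvec \<Rightarrow> 'k dvec" where
  "dadd c d = (\<lambda>\<sigma>. c \<sigma> + d \<sigma>)"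

definition dneg :: "'k::field dvec \<Rightarrow> 'k dvec" where
  "dneg c = (\<lambda>\<sigma>. - c \<sigma>)"

definition dzero :: "'k::field dvec" where
  "dzero = (\<lambda>\<sigma>. 0)"

definition ebas :: "('k::field \<Rightarrow> 'k) \<Rightarrow> 'k dvec" where
  "ebas \<sigma> = (\<lambda>\<tau>. if \<tau> = \<sigma> then 1 else 0)"

definition emb :: "'k::field \<Rightarrow> 'k dvec" where
  "emb k = (\<lambda>\<tau>. if \<tau> = id then k else 0)"

definition done_D :: "'k::field dvec" where
  "done_D = emb 1"

text \<open>(sum e_sigma c_sigma)(sum e_tau d_tau) = sum e_(sigma tau) Phi(sigma,tau) c_sigma^tau d_tau\<close>
definition dmul :: "('k::field \<Rightarrow> 'k) set \<Rightarrow> (('k \<Rightarrow> 'k) \<Rightarrow> ('k \<Rightarrow> 'k) \<Rightarrow> 'k)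
    \<Rightarrow> 'k dvec \<Rightarrow> 'k dvec \<Rightarrow> 'k dvec" where
  "dmul G \<Phi> c d = (\<lambda>\<rho>. \<Sum>\<sigma>\<in>G. \<Sum>\<tau>\<in>G.
      if gmul \<sigma> \<tau> = \<rho> then \<Phi> \<sigma> \<tau> * \<tau> (c \<sigma>) * d \<tau> else 0)"

definition division_algebra :: "('k::field \<Rightarrow> 'k) set \<Rightarrow> (('k \<Rightarrow> 'k) \<Rightarrow> ('k \<Rightarrow> 'k) \<Rightarrow> 'k) \<Rightarrow> bool" where
  "division_algebra G \<Phi> \<longleftrightarrow>
     (\<forall>c\<in>Dset G. c \<noteq> dzero \<longrightarrow> (\<exists>d\<in>Dset G. dmul G \<Phi> c d = done_D \<and> dmul G \<Phi> d c = done_D))"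

definition involution :: "('k::field \<Rightarrow> 'k) set \<Rightarrow> (('k \<Rightarrow> 'k) \<Rightarrow> ('k \<Rightarrow> 'k) \<Rightarrow> 'k)
    \<Rightarrow> ('k dvec \<Rightarrow> 'k dvec) \<Rightarrow> bool" where
  "involution G \<Phi> st \<longleftrightarrow>
     (\<forall>x\<in>Dset G. st x \<in> Dset G) \<and>
     (\<forall>x\<in>Dset G. \<forall>y\<in>Dset G. st (dadd x y) = dadd (st x) (st y)) \<and>
     (\<forall>x\<in>Dset G. \<forall>y\<in>Dset G. st (dmul G \<Phi> x y) = dmul G \<Phi> (st y) (st x)) \<and>
     (\<forall>x\<in>Dset G. st (st x) = x)"

definition fD :: "'k::field dvec \<Rightarrow> 'k" where
  "fD c = c id"

text \<open>the restriction of the involution to K (meaningful since K^* is contained in K)\<close>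
definition kst :: "('k::field dvec \<Rightarrow> 'k dvec) \<Rightarrow> 'k \<Rightarrow> 'k" where
  "kst st k = fD (st (emb k))"

text \<open>a_sigma = e_sigma^* e_sigma, as an element of K\<close>
definition aa :: "('k::field \<Rightarrow> 'k) set \<Rightarrow> (('k \<Rightarrow> 'k) \<Rightarrow> ('k \<Rightarrow> 'k) \<Rightarrow> 'k)
    \<Rightarrow> ('k dvec \<Rightarrow> 'k dvec) \<Rightarrow> ('k \<Rightarrow> 'k) \<Rightarrow> 'k" where
  "aa G \<Phi> st \<sigma> = fD (dmul G \<Phi> (st (ebas \<sigma>)) (ebas \<sigma>))"

definition hcone :: "'a set \<Rightarrow> ('a \<Rightarrow> 'a \<Rightarrow> 'a) \<Rightarrow> ('a \<Rightarrow> 'a \<Rightarrow> 'a) \<Rightarrow> ('a \<Rightarrow> 'a)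
    \<Rightarrow> 'a \<Rightarrow> 'a \<Rightarrow> ('a \<Rightarrow> 'a) \<Rightarrow> 'a set \<Rightarrow> bool" where
  "hcone R add mul neg zero one st M \<longleftrightarrow>
     M \<subseteq> {r\<in>R. st r = r} \<and> one \<in> M \<and>
     (\<forall>x\<in>M. \<forall>y\<in>M. add x y \<in> M) \<and>
     (\<forall>a\<in>R. \<forall>x\<in>M. mul (mul a x) (st a) \<in> M) \<and>
     M \<inter> neg ` M = {zero}"

definition NN :: "('k::field \<Rightarrow> 'k) set \<Rightarrow> (('k \<Rightarrow> 'k) \<Rightarrow> ('k \<Rightarrow> 'k) \<Rightarrow> 'k)
    \<Rightarrow> ('k dvec \<Rightarrow> 'k dvec) \<Rightarrow> 'k set set" where
  "NN G \<Phi> st = {N. hcone UNIV (+) (*) uminus 0 1 (kst st) N \<and> (\<forall>\<sigma>\<in>G. aa G \<Phi> st \<sigma> \<in> N)}"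

definition MM :: "('k::field \<Rightarrow> 'k) set \<Rightarrow> (('k \<Rightarrow> 'k) \<Rightarrow> ('k \<Rightarrow> 'k) \<Rightarrow> 'k)
    \<Rightarrow> ('k dvec \<Rightarrow> 'k dvec) \<Rightarrow> 'k dvec set set" where
  "MM G \<Phi> st = {M. hcone (Dset G) dadd (dmul G \<Phi>) dneg dzero done_D st M}"

definition Nsig :: "('k::field \<Rightarrow> 'k) set \<Rightarrow> (('k \<Rightarrow> 'k) \<Rightarrow> ('k \<Rightarrow> 'k) \<Rightarrow> 'k)
    \<Rightarrow> ('k dvec \<Rightarrow> 'k dvec) \<Rightarrow> 'k set \<Rightarrow> ('k \<Rightarrow> 'k) \<Rightarrow> 'k set" where
  "Nsig G \<Phi> st N \<sigma> = {k. aa G \<Phi> st \<sigma> * \<sigma> k \<in> N}"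

text \<open>lambda(a): a e_tau = sum_sigma e_sigma lambda(a)_(sigma,tau)\<close>
definition lam :: "('k::field \<Rightarrow> 'k) set \<Rightarrow> (('k \<Rightarrow> 'k) \<Rightarrow> ('k \<Rightarrow> 'k) \<Rightarrow> 'k)
    \<Rightarrow> 'k dvec \<Rightarrow> ('k \<Rightarrow> 'k) \<Rightarrow> ('k \<Rightarrow> 'k) \<Rightarrow> 'k" where
  "lam G \<Phi> c \<sigma> \<tau> = dmul G \<Phi> c (ebas \<tau>) \<sigma>"

definition contr :: "'k::field dvec set \<Rightarrow> 'k set" where
  "contr M = {k. emb k \<in> M}"

text \<open>extension N^e = {c. x^* A lambda(c) x in N for all x in K^n}, A = diag(a_sigma)\<close>
definition ext :: "('k::field \<Rightarrow> 'k) set \<Rightarrow> (('k \<Rightarrow> 'k) \<Rightarrow> ('k \<Rightarrow> 'k) \<Rightarrow> 'k)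
    \<Rightarrow> ('k dvec \<Rightarrow> 'k dvec) \<Rightarrow> 'k set \<Rightarrow> 'k dvec set" where
  "ext G \<Phi> st N = {c\<in>Dset G. \<forall>x :: ('k \<Rightarrow> 'k) \<Rightarrow> 'k.
      (\<Sum>\<sigma>\<in>G. \<Sum>\<tau>\<in>G. kst st (x \<sigma>) * aa G \<Phi> st \<sigma> * lam G \<Phi> c \<sigma> \<tau> * x \<tau>) \<in> N}"

end

theory Submission
  imports Defs
begin

locale cp =
  fixes G :: "('k::field_char_0 \<Rightarrow> 'k) set"
    and \<Phi> :: "('k \<Rightarrow> 'k) \<Rightarrow> ('k \<Rightarrow> 'k) \<Rightarrow> 'k"
    and st :: "'k dvec \<Rightarrow> 'k dvec"
  assumes galois: "galois_group G"
    and cocycle: "normalized_cocycle G \<Phi>"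
    and division: "division_algebra G \<Phi>"
    and invol: "involution G \<Phi> st"
    and K_stable: "\<forall>k. st (emb k) \<in> range emb"
    and a_in_K: "\<forall>\<sigma>\<in>G. dmul G \<Phi> (st (ebas \<sigma>)) (ebas \<sigma>) \<in> range emb"
begin

lemma finG: "finite G" using galois by (simp add: galois_group_def)
lemma idG: "id \<in> G" using galois by (simp add: galois_group_def)
lemma gmulG: "\<sigma> \<in> G \<Longrightarrow> \<tau> \<in> G \<Longrightarrow> gmul \<sigma> \<tau> \<in> G" using galois by (simp add: galois_group_def)
lemma invG: "\<sigma> \<in> G \<Longrightarrow> inv \<sigma> \<in> G" using galois by (simp add: galois_group_def)
lemma bijG: "\<sigma> \<in> G \<Longrightarrow> bij \<sigma>" using galois by (simp add: galois_group_def)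
lemma s_add: "\<sigma> \<in> G \<Longrightarrow> \<sigma> (x + y) = \<sigma> x + \<sigma> y" using galois by (simp add: galois_group_def)
lemma s_mult: "\<sigma> \<in> G \<Longrightarrow> \<sigma> (x * y) = \<sigma> x * \<sigma> y" using galois by (simp add: galois_group_def)
lemma s_one: "\<sigma> \<in> G \<Longrightarrow> \<sigma> 1 = 1" using galois by (simp add: galois_group_def)
lemma s_zero: "\<sigma> \<in> G \<Longrightarrow> \<sigma> 0 = 0"
proof -
  assume a: "\<sigma> \<in> G"
  have "\<sigma> (0 + 0) = \<sigma> 0 + \<sigma> 0" using s_add[OF a] .
  thus ?thesis by simp
qed
lemma s_sum: assumes "\<sigma> \<in> G" "finite A" shows "\<sigma> (\<Sum>i\<in>A. f i) = (\<Sum>i\<in>A. \<sigma> (f i))"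
  using assms(2) by (induction A rule: finite_induct) (auto simp: s_zero s_add assms(1))
lemma s_if: "\<sigma> \<in> G \<Longrightarrow> \<sigma> (if P then a else 0) = (if P then \<sigma> a else 0)"
  by (simp add: s_zero)
lemma s_inj: "\<sigma> \<in> G \<Longrightarrow> \<sigma> x = \<sigma> y \<Longrightarrow> x = y"
  using bijG bij_is_inj by (metis injD)
lemma s_eq0: "\<sigma> \<in> G \<Longrightarrow> \<sigma> x = 0 \<longleftrightarrow> x = 0"
  using s_inj s_zero by metis

lemma gmul_assoc: "gmul (gmul a b) c = gmul a (gmul b c)" by (simp add: gmul_def o_assoc)
lemma gmul_apply: "gmul a b x = b (a x)" by (simp add: gmul_def)
lemma gmul_id[simp]: "gmul id a = a" "gmul a id = a" by (auto simp: gmul_def)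
lemma gmul_cancel_left: "\<sigma> \<in> G \<Longrightarrow> gmul \<alpha> \<sigma> = gmul \<beta> \<sigma> \<Longrightarrow> \<alpha> = \<beta>"
proof
  fix x assume a: "\<sigma> \<in> G" "gmul \<alpha> \<sigma> = gmul \<beta> \<sigma>"
  hence "\<sigma> (\<alpha> x) = \<sigma> (\<beta> x)" unfolding gmul_def by (metis comp_apply)
  thus "\<alpha> x = \<beta> x" using s_inj a(1) by blast
qed
lemma gmul_cancel_right: "\<sigma> \<in> G \<Longrightarrow> gmul \<sigma> \<alpha> = gmul \<sigma> \<beta> \<Longrightarrow> \<alpha> = \<beta>"
  unfolding gmul_def using bijG bij_is_surj by (metis fun.map_comp comp_id surj_iff)
lemma gmul_inv1: "\<sigma> \<in> G \<Longrightarrow> gmul (inv \<sigma>) \<sigma> = id"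
  unfolding gmul_def by (metis bijG bij_is_surj surj_iff)
lemma gmul_inv2: "\<sigma> \<in> G \<Longrightarrow> gmul \<sigma> (inv \<sigma>) = id"
  unfolding gmul_def by (metis bijG bij_is_inj inj_iff)

lemma Phi_nz: "\<sigma> \<in> G \<Longrightarrow> \<tau> \<in> G \<Longrightarrow> \<Phi> \<sigma> \<tau> \<noteq> 0" using cocycle by (simp add: normalized_cocycle_def)
lemma Phi_id: "\<sigma> \<in> G \<Longrightarrow> \<Phi> id \<sigma> = 1" "\<sigma> \<in> G \<Longrightarrow> \<Phi> \<sigma> id = 1" using cocycle by (auto simp: normalized_cocycle_def)
lemma Phi_coc: "\<sigma> \<in> G \<Longrightarrow> \<tau> \<in> G \<Longrightarrow> \<rho> \<in> G \<Longrightarrow>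
        \<Phi> (gmul \<sigma> \<tau>) \<rho> * \<rho> (\<Phi> \<sigma> \<tau>) = \<Phi> \<sigma> (gmul \<tau> \<rho>) * \<Phi> \<tau> \<rho>"
  using cocycle by (simp add: normalized_cocycle_def)

abbreviation mul (infixl "\<cdot>" 70) where "mul \<equiv> dmul G \<Phi>"

lemma dmul_Dset: "mul c d \<in> Dset G"
  unfolding Dset_def dmul_def using gmulG by (auto intro!: sum.neutral)

lemma dmul_assoc: "mul (mul c d) e = mul c (mul d e)"
proof
  fix \<rho>
  have L: "mul (mul c d) e \<rho> = (\<Sum>\<sigma>\<in>G. \<Sum>\<tau>\<in>G. \<Sum>\<gamma>\<in>G.
      if gmul (gmul \<sigma> \<tau>) \<gamma> = \<rho> then \<Phi> (gmul \<sigma> \<tau>) \<gamma> * \<gamma> (\<Phi> \<sigma> \<tau>) * \<gamma> (\<tau> (c \<sigma>)) * \<gamma> (d \<tau>) * e \<gamma> else 0)"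
  proof -
    have "mul (mul c d) e \<rho> = (\<Sum>\<alpha>\<in>G. \<Sum>\<gamma>\<in>G. \<Sum>\<sigma>\<in>G. \<Sum>\<tau>\<in>G.
        if gmul \<sigma> \<tau> = \<alpha> then (if gmul \<alpha> \<gamma> = \<rho> then \<Phi> \<alpha> \<gamma> * \<gamma> (\<Phi> \<sigma> \<tau>) * \<gamma> (\<tau> (c \<sigma>)) * \<gamma> (d \<tau>) * e \<gamma> else 0) else 0)"
      unfolding dmul_def
    proof (intro sum.cong refl)
      fix \<alpha> \<gamma> assume a: "\<alpha> \<in> G" "\<gamma> \<in> G"
      show "(if gmul \<alpha> \<gamma> = \<rho> then \<Phi> \<alpha> \<gamma> * \<gamma> (\<Sum>\<sigma>\<in>G. \<Sum>\<tau>\<in>G. if gmul \<sigma> \<tau> = \<alpha> then \<Phi> \<sigma> \<tau> * \<tau> (c \<sigma>) * d \<tau> else 0) * e \<gamma> else 0)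
        = (\<Sum>\<sigma>\<in>G. \<Sum>\<tau>\<in>G. if gmul \<sigma> \<tau> = \<alpha> then (if gmul \<alpha> \<gamma> = \<rho> then \<Phi> \<alpha> \<gamma> * \<gamma> (\<Phi> \<sigma> \<tau>) * \<gamma> (\<tau> (c \<sigma>)) * \<gamma> (d \<tau>) * e \<gamma> else 0) else 0)"
      proof (cases "gmul \<alpha> \<gamma> = \<rho>")
        case True
        then show ?thesis
          by (simp add: s_sum[OF a(2) finG] s_if[OF a(2)] s_mult[OF a(2)] s_zero[OF a(2)] sum_distrib_left sum_distrib_right mult.assoc cong: if_cong) (auto intro!: sum.cong)
      qed (simp cong: if_cong)
    qed
    also have "\<dots> = (\<Sum>\<gamma>\<in>G. \<Sum>\<sigma>\<in>G. \<Sum>\<tau>\<in>G. \<Sum>\<alpha>\<in>G.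
        if gmul \<sigma> \<tau> = \<alpha> then (if gmul \<alpha> \<gamma> = \<rho> then \<Phi> \<alpha> \<gamma> * \<gamma> (\<Phi> \<sigma> \<tau>) * \<gamma> (\<tau> (c \<sigma>)) * \<gamma> (d \<tau>) * e \<gamma> else 0) else 0)"
      by (rule trans[OF sum.swap], rule sum.cong[OF refl], rule trans[OF sum.swap], rule sum.cong[OF refl], rule sum.swap)
    also have "\<dots> = (\<Sum>\<gamma>\<in>G. \<Sum>\<sigma>\<in>G. \<Sum>\<tau>\<in>G.
        if gmul (gmul \<sigma> \<tau>) \<gamma> = \<rho> then \<Phi> (gmul \<sigma> \<tau>) \<gamma> * \<gamma> (\<Phi> \<sigma> \<tau>) * \<gamma> (\<tau> (c \<sigma>)) * \<gamma> (d \<tau>) * e \<gamma> else 0)"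
      by (intro sum.cong refl) (simp add: sum.delta[OF finG] sum.delta'[OF finG] gmulG cong: if_cong)
    also have "\<dots> = (\<Sum>\<sigma>\<in>G. \<Sum>\<tau>\<in>G. \<Sum>\<gamma>\<in>G.
        if gmul (gmul \<sigma> \<tau>) \<gamma> = \<rho> then \<Phi> (gmul \<sigma> \<tau>) \<gamma> * \<gamma> (\<Phi> \<sigma> \<tau>) * \<gamma> (\<tau> (c \<sigma>)) * \<gamma> (d \<tau>) * e \<gamma> else 0)"
      by (rule trans[OF sum.swap], rule sum.cong[OF refl], rule sum.swap)
    finally show ?thesis .
  qed
  have R: "mul c (mul d e) \<rho> = (\<Sum>\<sigma>\<in>G. \<Sum>\<tau>\<in>G. \<Sum>\<gamma>\<in>G.
      if gmul \<sigma> (gmul \<tau> \<gamma>) = \<rho> then \<Phi> \<sigma> (gmul \<tau> \<gamma>) * \<Phi> \<tau> \<gamma> * \<gamma> (\<tau> (c \<sigma>)) * \<gamma> (d \<tau>) * e \<gamma> else 0)"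
  proof -
    have "mul c (mul d e) \<rho> = (\<Sum>\<sigma>\<in>G. \<Sum>\<beta>\<in>G. \<Sum>\<tau>\<in>G. \<Sum>\<gamma>\<in>G.
        if gmul \<tau> \<gamma> = \<beta> then (if gmul \<sigma> \<beta> = \<rho> then \<Phi> \<sigma> \<beta> * \<beta> (c \<sigma>) * (\<Phi> \<tau> \<gamma> * \<gamma> (d \<tau>) * e \<gamma>) else 0) else 0)"
      unfolding dmul_def
    proof (intro sum.cong refl)
      fix \<sigma> \<beta> assume a: "\<sigma> \<in> G" "\<beta> \<in> G"
      show "(if gmul \<sigma> \<beta> = \<rho> then \<Phi> \<sigma> \<beta> * \<beta> (c \<sigma>) * (\<Sum>\<tau>\<in>G. \<Sum>\<gamma>\<in>G. if gmul \<tau> \<gamma> = \<beta> then \<Phi> \<tau> \<gamma> * \<gamma> (d \<tau>) * e \<gamma> else 0) else 0)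
        = (\<Sum>\<tau>\<in>G. \<Sum>\<gamma>\<in>G. if gmul \<tau> \<gamma> = \<beta> then (if gmul \<sigma> \<beta> = \<rho> then \<Phi> \<sigma> \<beta> * \<beta> (c \<sigma>) * (\<Phi> \<tau> \<gamma> * \<gamma> (d \<tau>) * e \<gamma>) else 0) else 0)"
      proof (cases "gmul \<sigma> \<beta> = \<rho>")
        case True
        then show ?thesis
          by (simp add: sum_distrib_left cong: if_cong) (auto intro!: sum.cong)
      qed (simp cong: if_cong)
    qed
    also have "\<dots> = (\<Sum>\<sigma>\<in>G. \<Sum>\<tau>\<in>G. \<Sum>\<gamma>\<in>G. \<Sum>\<beta>\<in>G.
        if gmul \<tau> \<gamma> = \<beta> then (if gmul \<sigma> \<beta> = \<rho> then \<Phi> \<sigma> \<beta> * \<beta> (c \<sigma>) * (\<Phi> \<tau> \<gamma> * \<gamma> (d \<tau>) * e \<gamma>) else 0) else 0)"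
      by (rule sum.cong[OF refl], rule trans[OF sum.swap], rule sum.cong[OF refl], rule sum.swap)
    also have "\<dots> = (\<Sum>\<sigma>\<in>G. \<Sum>\<tau>\<in>G. \<Sum>\<gamma>\<in>G.
      if gmul \<sigma> (gmul \<tau> \<gamma>) = \<rho> then \<Phi> \<sigma> (gmul \<tau> \<gamma>) * \<Phi> \<tau> \<gamma> * \<gamma> (\<tau> (c \<sigma>)) * \<gamma> (d \<tau>) * e \<gamma> else 0)"
      by (intro sum.cong refl) (simp add: sum.delta[OF finG] sum.delta'[OF finG] gmulG gmul_apply mult_ac cong: if_cong)
    finally show ?thesis .
  qed
  show "mul (mul c d) e \<rho> = mul c (mul d e) \<rho>"
    unfolding L R
  proof (intro sum.cong refl)
    fix \<sigma> \<tau> \<gamma> assume a: "\<sigma> \<in> G" "\<tau> \<in> G" "\<gamma> \<in> G"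
    have "\<Phi> (gmul \<sigma> \<tau>) \<gamma> * \<gamma> (\<Phi> \<sigma> \<tau>) = \<Phi> \<sigma> (gmul \<tau> \<gamma>) * \<Phi> \<tau> \<gamma>"
      using Phi_coc a by blast
    then show "(if gmul (gmul \<sigma> \<tau>) \<gamma> = \<rho> then \<Phi> (gmul \<sigma> \<tau>) \<gamma> * \<gamma> (\<Phi> \<sigma> \<tau>) * \<gamma> (\<tau> (c \<sigma>)) * \<gamma> (d \<tau>) * e \<gamma> else 0)
      = (if gmul \<sigma> (gmul \<tau> \<gamma>) = \<rho> then \<Phi> \<sigma> (gmul \<tau> \<gamma>) * \<Phi> \<tau> \<gamma> * \<gamma> (\<tau> (c \<sigma>)) * \<gamma> (d \<tau>) * e \<gamma> else 0)"
      by (simp add: gmul_assoc)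
  qed
qed


lemma sum_single: "finite A \<Longrightarrow> a \<in> A \<Longrightarrow> (\<And>x. x \<in> A \<Longrightarrow> x \<noteq> a \<Longrightarrow> f x = 0) \<Longrightarrow> sum f A = f a"
  by (subst sum.remove[of A a]) (auto intro!: sum.neutral)

lemma emb_Dset: "emb k \<in> Dset G" using idG by (auto simp: Dset_def emb_def)
lemma ebas_Dset: "\<sigma> \<in> G \<Longrightarrow> ebas \<sigma> \<in> Dset G" by (auto simp: Dset_def ebas_def)
lemma dzero_Dset: "dzero \<in> Dset G" by (auto simp: Dset_def dzero_def)
lemma dadd_Dset: "a \<in> Dset G \<Longrightarrow> b \<in> Dset G \<Longrightarrow> dadd a b \<in> Dset G" by (auto simp: Dset_def dadd_def)
lemma done_Dset: "done_D \<in> Dset G" by (simp add: done_D_def emb_Dset)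
lemma Dset_out: "c \<in> Dset G \<Longrightarrow> \<rho> \<notin> G \<Longrightarrow> c \<rho> = 0" by (simp add: Dset_def)

lemma st_Dset: "x \<in> Dset G \<Longrightarrow> st x \<in> Dset G" using invol by (simp add: involution_def)
lemma st_add: "x \<in> Dset G \<Longrightarrow> y \<in> Dset G \<Longrightarrow> st (dadd x y) = dadd (st x) (st y)" using invol by (simp add: involution_def)
lemma st_mul: "x \<in> Dset G \<Longrightarrow> y \<in> Dset G \<Longrightarrow> st (mul x y) = mul (st y) (st x)" using invol by (simp add: involution_def)
lemma st_st: "x \<in> Dset G \<Longrightarrow> st (st x) = x" using invol by (simp add: involution_def)

lemma mul_ebas_right: "\<tau> \<in> G \<Longrightarrow> mul u (ebas \<tau>) \<rho> = (\<Sum>\<alpha>\<in>G. if gmul \<alpha> \<tau> = \<rho> then \<Phi> \<alpha> \<tau> * \<tau> (u \<alpha>) else 0)"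
  unfolding dmul_def
  by (intro sum.cong refl, subst sum_single[of G \<tau>]) (auto simp: finG ebas_def)

lemma emb_mul_left: "c \<in> Dset G \<Longrightarrow> mul (emb k) c = (\<lambda>\<rho>. \<rho> k * c \<rho>)"
proof
  fix \<rho> assume c: "c \<in> Dset G"
  have "mul (emb k) c \<rho> = (\<Sum>\<tau>\<in>G. if gmul id \<tau> = \<rho> then \<Phi> id \<tau> * \<tau> (emb k id) * c \<tau> else 0)"
    unfolding dmul_def
    by (rule sum_single[OF finG idG]) (auto simp: emb_def s_zero intro!: sum.neutral)
  also have "\<dots> = (\<Sum>\<tau>\<in>G. if \<tau> = \<rho> then \<tau> k * c \<tau> else 0)"
    by (intro sum.cong refl) (auto simp: emb_def Phi_id)
  also have "\<dots> = \<rho> k * c \<rho>" using Dset_out[OF c] by (cases "\<rho> \<in> G") (auto simp: sum.delta[OF finG])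
  finally show "mul (emb k) c \<rho> = \<rho> k * c \<rho>" .
qed

lemma emb_mul_right: "c \<in> Dset G \<Longrightarrow> mul c (emb k) = (\<lambda>\<rho>. c \<rho> * k)"
proof
  fix \<rho> assume c: "c \<in> Dset G"
  have "mul c (emb k) \<rho> = (\<Sum>\<sigma>\<in>G. if gmul \<sigma> id = \<rho> then \<Phi> \<sigma> id * id (c \<sigma>) * emb k id else 0)"
    unfolding dmul_def
    by (intro sum.cong refl, rule sum_single[OF finG idG]) (auto simp: emb_def)
  also have "\<dots> = (\<Sum>\<sigma>\<in>G. if \<sigma> = \<rho> then c \<sigma> * k else 0)"
    by (intro sum.cong refl) (auto simp: emb_def Phi_id)
  also have "\<dots> = c \<rho> * k" using Dset_out[OF c] by (cases "\<rho> \<in> G") (auto simp: sum.delta[OF finG])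
  finally show "mul c (emb k) \<rho> = c \<rho> * k" .
qed

lemma emb_emb: "mul (emb a) (emb b) = emb (a * b)"
  unfolding emb_mul_left[OF emb_Dset] by (auto simp: emb_def fun_eq_iff)
lemma one_left: "x \<in> Dset G \<Longrightarrow> mul done_D x = x"
  unfolding done_D_def emb_mul_left
  by (rule ext) (metis Dset_out mult_1 mult_zero_right s_one)
lemma one_right: "x \<in> Dset G \<Longrightarrow> mul x done_D = x"
  by (simp add: done_D_def emb_mul_right)
lemma ebas_emb: "\<sigma> \<in> G \<Longrightarrow> mul (ebas \<sigma>) (emb k) = (\<lambda>\<rho>. if \<rho> = \<sigma> then k else 0)"
  unfolding emb_mul_right[OF ebas_Dset] by (auto simp: ebas_def fun_eq_iff)
lemma emb_ebas: "\<sigma> \<in> G \<Longrightarrow> mul (emb k) (ebas \<sigma>) = (\<lambda>\<rho>. if \<rho> = \<sigma> then \<sigma> k else 0)"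
  unfolding emb_mul_left[OF ebas_Dset] by (auto simp: ebas_def fun_eq_iff)
lemma emb_ebas2: "\<sigma> \<in> G \<Longrightarrow> mul (emb k) (ebas \<sigma>) = mul (ebas \<sigma>) (emb (\<sigma> k))"
  by (simp add: emb_ebas ebas_emb)
lemma fD_emb_left: "c \<in> Dset G \<Longrightarrow> fD (mul (emb k) c) = k * fD c"
  by (simp add: emb_mul_left fD_def)
lemma fD_emb_right: "c \<in> Dset G \<Longrightarrow> fD (mul c (emb k)) = fD c * k"
  by (simp add: emb_mul_right fD_def)
lemma ebas_id: "ebas id = done_D" by (rule ext) (simp add: ebas_def done_D_def emb_def)
lemma emb_inj: "emb a = emb b \<Longrightarrow> a = b" by (metis emb_def)
lemma emb_zero: "emb 0 = dzero" by (rule ext) (simp add: emb_def dzero_def)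
lemma emb_add: "emb (a + b) = dadd (emb a) (emb b)" by (rule ext) (simp add: emb_def dadd_def)
lemma fD_emb: "fD (emb a) = a" by (simp add: fD_def emb_def)

lemma st_zero: "st dzero = dzero"
proof -
  have "st (dadd dzero dzero) = dadd (st dzero) (st dzero)" by (simp add: st_add dzero_Dset)
  hence "st dzero = dadd (st dzero) (st dzero)" by (simp add: dadd_def dzero_def)
  thus ?thesis by (simp add: dadd_def dzero_def fun_eq_iff)
qed
lemma st_one: "st done_D = done_D"
proof -
  have "mul done_D (st done_D) = st done_D" by (simp add: one_left st_Dset done_Dset)
  have "st (mul done_D (st done_D)) = mul done_D (st done_D)"
    by (simp add: st_mul st_Dset done_Dset st_st)
  hence "st (st done_D) = mul done_D (st done_D)" by (simp add: one_left st_Dset done_Dset)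
  thus ?thesis by (simp add: st_st done_Dset one_left st_Dset)
qed
lemma st_emb: "st (emb k) = emb (kst st k)"
proof -
  obtain j where "st (emb k) = emb j" using K_stable by blast
  thus ?thesis by (simp add: kst_def fD_emb)
qed
lemma kst_kst: "kst st (kst st k) = k"
  by (metis st_emb st_st emb_Dset emb_inj)
lemma kst_one: "kst st 1 = 1" by (metis st_emb st_one done_D_def emb_inj)
lemma kst_zero: "kst st 0 = 0" by (metis st_emb st_zero emb_zero emb_inj)

lemma aa_emb: "\<sigma> \<in> G \<Longrightarrow> mul (st (ebas \<sigma>)) (ebas \<sigma>) = emb (aa G \<Phi> st \<sigma>)"
proof -
  assume s: "\<sigma> \<in> G"
  then obtain j where "mul (st (ebas \<sigma>)) (ebas \<sigma>) = emb j" using a_in_K by blast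
  thus ?thesis by (simp add: aa_def fD_emb)
qed
lemma aa_id: "aa G \<Phi> st id = 1"
  by (simp add: aa_def ebas_id st_one one_left done_Dset) (simp add: done_D_def fD_emb)

lemma st_ebas_support: assumes s: "\<sigma> \<in> G" and a: "\<alpha> \<noteq> inv \<sigma>" shows "st (ebas \<sigma>) \<alpha> = 0"
proof (cases "\<alpha> \<in> G")
  case False thus ?thesis using Dset_out st_Dset ebas_Dset s by blast
next
  case True
  let ?w = "st (ebas \<sigma>)"
  have ne: "gmul \<alpha> \<sigma> \<noteq> id" using gmul_cancel_left[OF s, of \<alpha> "inv \<sigma>"] gmul_inv1[OF s] a by auto
  have "mul ?w (ebas \<sigma>) (gmul \<alpha> \<sigma>) = (\<Sum>\<alpha>'\<in>G. if gmul \<alpha>' \<sigma> = gmul \<alpha> \<sigma> then \<Phi> \<alpha>' \<sigma> * \<sigma> (?w \<alpha>') else 0)"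
    by (rule mul_ebas_right[OF s])
  also have "\<dots> = (\<Sum>\<alpha>'\<in>G. if \<alpha>' = \<alpha> then \<Phi> \<alpha>' \<sigma> * \<sigma> (?w \<alpha>') else 0)"
    by (intro sum.cong refl) (metis gmul_cancel_left[OF s])
  also have "\<dots> = \<Phi> \<alpha> \<sigma> * \<sigma> (?w \<alpha>)" using True by (simp add: sum.delta[OF finG])
  finally have "\<Phi> \<alpha> \<sigma> * \<sigma> (?w \<alpha>) = 0" using ne by (simp add: aa_emb[OF s] emb_def)
  thus ?thesis using Phi_nz[OF True s] s_eq0[OF s] by simp
qed

lemma fD_st_ebas_aux: assumes s: "\<sigma> \<in> G"
  shows "fD (mul (st (ebas \<sigma>)) z) = \<Phi> (inv \<sigma>) \<sigma> * \<sigma> (st (ebas \<sigma>) (inv \<sigma>)) * z \<sigma>"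
proof -
  let ?w = "st (ebas \<sigma>)"
  have "fD (mul ?w z) = (\<Sum>\<beta>\<in>G. if gmul (inv \<sigma>) \<beta> = id then \<Phi> (inv \<sigma>) \<beta> * \<beta> (?w (inv \<sigma>)) * z \<beta> else 0)"
    unfolding fD_def dmul_def
    by (rule sum_single[OF finG invG[OF s]]) (auto simp: st_ebas_support[OF s] s_zero intro!: sum.neutral)
  also have "\<dots> = (\<Sum>\<beta>\<in>G. if \<beta> = \<sigma> then \<Phi> (inv \<sigma>) \<beta> * \<beta> (?w (inv \<sigma>)) * z \<beta> else 0)"
    by (intro sum.cong refl) (metis gmul_cancel_right[OF invG[OF s]] gmul_inv1[OF s])
  also have "\<dots> = \<Phi> (inv \<sigma>) \<sigma> * \<sigma> (?w (inv \<sigma>)) * z \<sigma>" using s by (simp add: sum.delta[OF finG])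
  finally show ?thesis .
qed

lemma fD_st_ebas: assumes s: "\<sigma> \<in> G" shows "fD (mul (st (ebas \<sigma>)) z) = aa G \<Phi> st \<sigma> * z \<sigma>"
proof -
  have "aa G \<Phi> st \<sigma> = \<Phi> (inv \<sigma>) \<sigma> * \<sigma> (st (ebas \<sigma>) (inv \<sigma>))"
    using fD_st_ebas_aux[OF s, of "ebas \<sigma>"] by (simp add: aa_def ebas_def)
  thus ?thesis by (simp add: fD_st_ebas_aux[OF s])
qed


definition dsum :: "'i set \<Rightarrow> ('i \<Rightarrow> 'k dvec) \<Rightarrow> 'k dvec" where
  "dsum A f = (\<lambda>\<rho>. \<Sum>i\<in>A. f i \<rho>)"

lemma dsum_empty: "dsum {} f = dzero" by (simp add: dsum_def dzero_def)
lemma dsum_insert: "finite A \<Longrightarrow> x \<notin> A \<Longrightarrow> dsum (insert x A) f = dadd (f x) (dsum A f)"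
  by (simp add: dsum_def dadd_def)
lemma dsum_Dset: "(\<And>i. i \<in> A \<Longrightarrow> f i \<in> Dset G) \<Longrightarrow> dsum A f \<in> Dset G"
  by (auto simp: dsum_def Dset_def intro!: sum.neutral)
lemma st_dsum: assumes "finite A" shows "(\<And>i. i \<in> A \<Longrightarrow> f i \<in> Dset G) \<Longrightarrow> st (dsum A f) = dsum A (\<lambda>i. st (f i))"
  using assms by (induction A rule: finite_induct) (auto simp: dsum_empty st_zero dsum_insert st_add dsum_Dset)
lemma mul_dadd_left: "mul (dadd a b) z = dadd (mul a z) (mul b z)"
  unfolding dmul_def dadd_def
  by (rule ext) (auto simp: s_add sum.distrib[symmetric] distrib_left distrib_right intro!: sum.cong)
lemma mul_dzero_left: "mul dzero z = dzero"
  unfolding dmul_def dzero_def by (rule ext) (auto simp: s_zero intro!: sum.neutral)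
lemma mul_dsum_left: assumes "finite A" shows "mul (dsum A f) z = dsum A (\<lambda>i. mul (f i) z)"
  using assms by (induction A rule: finite_induct) (auto simp: dsum_empty dsum_insert mul_dadd_left mul_dzero_left)
lemma fD_dsum: "fD (dsum A f) = (\<Sum>i\<in>A. fD (f i))" by (simp add: fD_def dsum_def)

lemma decomp: "d \<in> Dset G \<Longrightarrow> d = dsum G (\<lambda>\<sigma>. mul (ebas \<sigma>) (emb (d \<sigma>)))"
proof (rule ext)
  fix \<rho> assume d: "d \<in> Dset G"
  have "dsum G (\<lambda>\<sigma>. mul (ebas \<sigma>) (emb (d \<sigma>))) \<rho> = (\<Sum>\<sigma>\<in>G. if \<rho> = \<sigma> then d \<sigma> else 0)"
    unfolding dsum_def by (intro sum.cong refl) (simp add: ebas_emb)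
  also have "\<dots> = d \<rho>" using Dset_out[OF d] by (cases "\<rho> \<in> G") (auto simp: sum.delta'[OF finG])
  finally show "d \<rho> = dsum G (\<lambda>\<sigma>. mul (ebas \<sigma>) (emb (d \<sigma>))) \<rho>" by simp
qed

lemma main_F: assumes d: "d \<in> Dset G" shows "fD (mul (st d) z) = (\<Sum>\<sigma>\<in>G. kst st (d \<sigma>) * aa G \<Phi> st \<sigma> * z \<sigma>)"
proof -
  have "st d = dsum G (\<lambda>\<sigma>. st (mul (ebas \<sigma>) (emb (d \<sigma>))))"
    by (subst decomp[OF d], rule st_dsum[OF finG]) (rule dmul_Dset)
  also have "\<dots> = dsum G (\<lambda>\<sigma>. mul (emb (kst st (d \<sigma>))) (st (ebas \<sigma>)))"
    unfolding dsum_def by (rule ext, intro sum.cong refl) (simp add: st_mul ebas_Dset emb_Dset st_emb)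
  finally have "fD (mul (st d) z) = (\<Sum>\<sigma>\<in>G. fD (mul (mul (emb (kst st (d \<sigma>))) (st (ebas \<sigma>))) z))"
    by (simp add: mul_dsum_left[OF finG] fD_dsum)
  also have "\<dots> = (\<Sum>\<sigma>\<in>G. kst st (d \<sigma>) * aa G \<Phi> st \<sigma> * z \<sigma>)"
    by (intro sum.cong refl) (simp add: dmul_assoc fD_emb_left dmul_Dset fD_st_ebas mult.assoc)
  finally show ?thesis .
qed

lemma lam_sum: "mul u d \<sigma> = (\<Sum>\<tau>\<in>G. lam G \<Phi> u \<sigma> \<tau> * d \<tau>)"
proof -
  have "mul u d \<sigma> = (\<Sum>\<alpha>\<in>G. \<Sum>\<tau>\<in>G. if gmul \<alpha> \<tau> = \<sigma> then \<Phi> \<alpha> \<tau> * \<tau> (u \<alpha>) * d \<tau> else 0)"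
    by (simp add: dmul_def)
  also have "\<dots> = (\<Sum>\<tau>\<in>G. \<Sum>\<alpha>\<in>G. if gmul \<alpha> \<tau> = \<sigma> then \<Phi> \<alpha> \<tau> * \<tau> (u \<alpha>) * d \<tau> else 0)"
    by (rule sum.swap)
  also have "\<dots> = (\<Sum>\<tau>\<in>G. lam G \<Phi> u \<sigma> \<tau> * d \<tau>)"
    by (intro sum.cong refl) (auto simp: lam_def mul_ebas_right sum_distrib_right intro!: sum.cong)
  finally show ?thesis .
qed

lemma ident_I: assumes d: "d \<in> Dset G"
  shows "fD (mul (mul (st d) u) d) = (\<Sum>\<sigma>\<in>G. \<Sum>\<tau>\<in>G. kst st (d \<sigma>) * aa G \<Phi> st \<sigma> * lam G \<Phi> u \<sigma> \<tau> * d \<tau>)"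
  by (simp add: dmul_assoc main_F[OF d] lam_sum sum_distrib_left mult.assoc)


abbreviation SS where "SS N u x \<equiv> (\<Sum>\<sigma>\<in>G. \<Sum>\<tau>\<in>G. kst st (x \<sigma>) * aa G \<Phi> st \<sigma> * lam G \<Phi> u \<sigma> \<tau> * x \<tau>)"

lemma ext_char: "ext G \<Phi> st N = {u\<in>Dset G. \<forall>d\<in>Dset G. fD (mul (mul (st d) u) d) \<in> N}"
proof (rule set_eqI, rule iffI)
  fix u assume "u \<in> ext G \<Phi> st N"
  thus "u \<in> {u\<in>Dset G. \<forall>d\<in>Dset G. fD (mul (mul (st d) u) d) \<in> N}"
    by (simp add: ext_def ident_I)
next
  fix u assume u: "u \<in> {u\<in>Dset G. \<forall>d\<in>Dset G. fD (mul (mul (st d) u) d) \<in> N}"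
  show "u \<in> ext G \<Phi> st N" unfolding ext_def
  proof (intro CollectI conjI allI)
    show "u \<in> Dset G" using u by simp
    fix x :: "('k \<Rightarrow> 'k) \<Rightarrow> 'k"
    define d where "d = (\<lambda>\<rho>. if \<rho> \<in> G then x \<rho> else 0)"
    have dD: "d \<in> Dset G" by (simp add: d_def Dset_def)
    have "SS N u x = SS N u d" by (intro sum.cong refl) (simp add: d_def)
    also have "\<dots> = fD (mul (mul (st d) u) d)" by (simp add: ident_I[OF dD])
    also have "\<dots> \<in> N" using u dD by simp
    finally show "SS N u x \<in> N" .
  qed
qed

lemma ext_mono: "A \<subseteq> B \<Longrightarrow> ext G \<Phi> st A \<subseteq> ext G \<Phi> st B"
  unfolding ext_def by blast

lemma lam_emb: "\<sigma> \<in> G \<Longrightarrow> \<tau> \<in> G \<Longrightarrow> lam G \<Phi> (emb k) \<sigma> \<tau> = (if \<sigma> = \<tau> then \<sigma> k else 0)"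
  by (simp add: lam_def emb_ebas)

lemma S_emb: "SS N (emb k) x = (\<Sum>\<sigma>\<in>G. kst st (x \<sigma>) * (aa G \<Phi> st \<sigma> * \<sigma> k) * x \<sigma>)"
  apply (intro sum.cong refl)
  apply (subst sum_single[OF finG], assumption)
   apply (auto simp: lam_emb)
  done

lemma sum_in: assumes "finite A" "0 \<in> N" "\<forall>a\<in>N. \<forall>b\<in>N. a + b \<in> N"
  shows "(\<And>i. i \<in> A \<Longrightarrow> f i \<in> N) \<Longrightarrow> sum f A \<in> N"
  using assms(1) by (induction A rule: finite_induct) (auto simp: assms(2,3))

lemma contr_ext: assumes z: "0 \<in> N" and ad: "\<forall>a\<in>N. \<forall>b\<in>N. a + b \<in> N"
  and cj: "\<forall>a. \<forall>n\<in>N. kst st a * n * a \<in> N"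
  shows "contr (ext G \<Phi> st N) = (\<Inter>\<sigma>\<in>G. Nsig G \<Phi> st N \<sigma>)"
proof (rule set_eqI, rule iffI)
  fix k assume k: "k \<in> contr (ext G \<Phi> st N)"
  show "k \<in> (\<Inter>\<sigma>\<in>G. Nsig G \<Phi> st N \<sigma>)"
  proof
    fix \<sigma> assume s: "\<sigma> \<in> G"
    have "SS N (emb k) (ebas \<sigma>) \<in> N" using k by (simp add: contr_def ext_def)
    moreover have "SS N (emb k) (ebas \<sigma>) = aa G \<Phi> st \<sigma> * \<sigma> k"
      unfolding S_emb by (subst sum_single[OF finG s]) (auto simp: ebas_def kst_one)
    ultimately show "k \<in> Nsig G \<Phi> st N \<sigma>" by (simp add: Nsig_def)
  qed
next
  fix k assume k: "k \<in> (\<Inter>\<sigma>\<in>G. Nsig G \<Phi> st N \<sigma>)"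
  show "k \<in> contr (ext G \<Phi> st N)"
    unfolding contr_def ext_def
  proof (intro CollectI conjI allI emb_Dset)
    fix x :: "('k \<Rightarrow> 'k) \<Rightarrow> 'k"
    show "SS N (emb k) x \<in> N" unfolding S_emb
      by (rule sum_in[OF finG z ad]) (use k cj in \<open>auto simp: Nsig_def\<close>)
  qed
qed

lemma NN_props: assumes "N \<in> NN G \<Phi> st"
  shows "0 \<in> N" "\<forall>a\<in>N. \<forall>b\<in>N. a + b \<in> N" "\<forall>a. \<forall>n\<in>N. kst st a * n * a \<in> N"
proof -
  have h: "hcone UNIV (+) (*) uminus 0 1 (kst st) N" using assms by (simp add: NN_def)
  show "0 \<in> N" using h unfolding hcone_def by blast
  show "\<forall>a\<in>N. \<forall>b\<in>N. a + b \<in> N" using h unfolding hcone_def by blast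
  show "\<forall>a. \<forall>n\<in>N. kst st a * n * a \<in> N"
  proof (intro allI ballI)
    fix a n assume "n \<in> N"
    hence "kst st a * n * kst st (kst st a) \<in> N" using h unfolding hcone_def by blast
    thus "kst st a * n * a \<in> N" by (simp add: kst_kst)
  qed
qed

lemma Nsig_id: "Nsig G \<Phi> st N id = N" by (simp add: Nsig_def aa_id)

lemma ebas_self: "\<sigma> \<in> G \<Longrightarrow> mul y (ebas \<sigma>) \<sigma> = \<sigma> (fD y)"
proof -
  assume s: "\<sigma> \<in> G"
  have "mul y (ebas \<sigma>) \<sigma> = (\<Sum>\<alpha>\<in>G. if \<alpha> = id then \<Phi> \<alpha> \<sigma> * \<sigma> (y \<alpha>) else 0)"
    unfolding mul_ebas_right[OF s]
    by (intro sum.cong refl) (metis gmul_cancel_left[OF s] gmul_id(1))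
  also have "\<dots> = \<sigma> (fD y)" using idG s by (simp add: sum.delta[OF finG] Phi_id fD_def)
  finally show ?thesis .
qed

lemma conjP: assumes s: "\<sigma> \<in> G" and d: "d \<in> Dset G"
  shows "fD (mul (mul (st (mul d (ebas \<sigma>))) u) (mul d (ebas \<sigma>))) = aa G \<Phi> st \<sigma> * \<sigma> (fD (mul (mul (st d) u) d))"
proof -
  have "mul (mul (st (mul d (ebas \<sigma>))) u) (mul d (ebas \<sigma>)) = mul (st (ebas \<sigma>)) (mul (mul (mul (st d) u) d) (ebas \<sigma>))"
    by (simp add: st_mul d ebas_Dset[OF s] dmul_assoc)
  thus ?thesis by (simp add: fD_st_ebas[OF s] ebas_self[OF s])
qed

lemma ebas_inv: assumes s: "\<sigma> \<in> G" obtains v where "v \<in> Dset G" "mul (ebas \<sigma>) v = done_D" "mul v (ebas \<sigma>) = done_D"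
proof -
  have "ebas \<sigma> \<noteq> dzero" by (metis ebas_def dzero_def zero_neq_one)
  thus ?thesis using division ebas_Dset[OF s] that unfolding division_algebra_def by blast
qed

lemma ext_Nsig: assumes s: "\<sigma> \<in> G" shows "ext G \<Phi> st (Nsig G \<Phi> st N \<sigma>) = ext G \<Phi> st N"
proof -
  let ?e = "ebas \<sigma>"
  have "(\<forall>d\<in>Dset G. fD (mul (mul (st d) u) d) \<in> Nsig G \<Phi> st N \<sigma>) \<longleftrightarrow>
        (\<forall>d\<in>Dset G. fD (mul (mul (st d) u) d) \<in> N)" for u
  proof
    assume h: "\<forall>d\<in>Dset G. fD (mul (mul (st d) u) d) \<in> Nsig G \<Phi> st N \<sigma>"
    show "\<forall>d\<in>Dset G. fD (mul (mul (st d) u) d) \<in> N"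
    proof
      fix d' assume d': "d' \<in> Dset G"
      obtain v where v: "v \<in> Dset G" "mul ?e v = done_D" "mul v ?e = done_D" using ebas_inv[OF s] .
      have dd: "mul d' v \<in> Dset G" by (rule dmul_Dset)
      have eq: "mul (mul d' v) ?e = d'" by (simp add: dmul_assoc v one_right d')
      have "aa G \<Phi> st \<sigma> * \<sigma> (fD (mul (mul (st (mul d' v)) u) (mul d' v))) \<in> N"
        using h dd by (simp add: Nsig_def)
      thus "fD (mul (mul (st d') u) d') \<in> N" using conjP[OF s dd, of u] eq by simp
    qed
  next
    assume h: "\<forall>d\<in>Dset G. fD (mul (mul (st d) u) d) \<in> N"
    show "\<forall>d\<in>Dset G. fD (mul (mul (st d) u) d) \<in> Nsig G \<Phi> st N \<sigma>"
    proof
      fix d assume d: "d \<in> Dset G"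
      have "fD (mul (mul (st (mul d ?e)) u) (mul d ?e)) \<in> N" using h dmul_Dset by blast
      thus "fD (mul (mul (st d) u) d) \<in> Nsig G \<Phi> st N \<sigma>" using conjP[OF s d, of u] by (simp add: Nsig_def)
    qed
  qed
  thus ?thesis unfolding ext_char by blast
qed

lemma ext_contr_ext: assumes "N \<in> NN G \<Phi> st"
  shows "ext G \<Phi> st (contr (ext G \<Phi> st N)) = ext G \<Phi> st N"
proof (rule equalityI)
  have c: "contr (ext G \<Phi> st N) = (\<Inter>\<sigma>\<in>G. Nsig G \<Phi> st N \<sigma>)"
    using contr_ext NN_props[OF assms] by blast
  show "ext G \<Phi> st (contr (ext G \<Phi> st N)) \<subseteq> ext G \<Phi> st N"
    unfolding c by (rule order_trans[OF ext_mono ], rule INT_lower[OF idG]) (simp add: Nsig_id)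
  show "ext G \<Phi> st N \<subseteq> ext G \<Phi> st (contr (ext G \<Phi> st N))"
  proof
    fix c assume h: "c \<in> ext G \<Phi> st N"
    have "\<forall>\<sigma>\<in>G. c \<in> ext G \<Phi> st (Nsig G \<Phi> st N \<sigma>)" using h ext_Nsig by blast
    thus "c \<in> ext G \<Phi> st (contr (ext G \<Phi> st N))" unfolding c using h by (auto simp: ext_def)
  qed
qed

lemma MM_props: assumes "M \<in> MM G \<Phi> st"
  shows "M \<subseteq> Dset G" "dzero \<in> M" "\<forall>a\<in>M. \<forall>b\<in>M. dadd a b \<in> M"
        "\<forall>a\<in>Dset G. \<forall>x\<in>M. mul (mul a x) (st a) \<in> M"
  using assms unfolding MM_def hcone_def by blast+

lemma key5: "\<sigma> \<in> G \<Longrightarrow> mul (mul (st (ebas \<sigma>)) (emb k)) (ebas \<sigma>) = emb (aa G \<Phi> st \<sigma> * \<sigma> k)"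
proof -
  assume s: "\<sigma> \<in> G"
  have "mul (mul (st (ebas \<sigma>)) (emb k)) (ebas \<sigma>) = mul (st (ebas \<sigma>)) (mul (ebas \<sigma>) (emb (\<sigma> k)))"
    by (simp add: dmul_assoc emb_ebas2[OF s])
  also have "\<dots> = mul (mul (st (ebas \<sigma>)) (ebas \<sigma>)) (emb (\<sigma> k))" by (simp add: dmul_assoc)
  also have "\<dots> = emb (aa G \<Phi> st \<sigma> * \<sigma> k)" by (simp add: aa_emb[OF s] emb_emb)
  finally show ?thesis .
qed

lemma Nsig_contr: assumes M: "M \<in> MM G \<Phi> st" and s: "\<sigma> \<in> G"
  shows "Nsig G \<Phi> st (contr M) \<sigma> = contr M"
proof (rule set_eqI, rule iffI)
  fix k assume "k \<in> Nsig G \<Phi> st (contr M) \<sigma>"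
  hence h: "mul (mul (st (ebas \<sigma>)) (emb k)) (ebas \<sigma>) \<in> M" by (simp add: Nsig_def contr_def key5[OF s])
  obtain v where v: "v \<in> Dset G" "mul (ebas \<sigma>) v = done_D" "mul v (ebas \<sigma>) = done_D" using ebas_inv[OF s] .
  have "mul (mul (st v) (mul (mul (st (ebas \<sigma>)) (emb k)) (ebas \<sigma>))) (st (st v)) \<in> M"
    using MM_props(4)[OF M] h st_Dset[OF v(1)] by blast
  moreover have "mul (mul (st v) (mul (mul (st (ebas \<sigma>)) (emb k)) (ebas \<sigma>))) (st (st v)) = emb k"
  proof -
    have "mul (mul (st v) (mul (mul (st (ebas \<sigma>)) (emb k)) (ebas \<sigma>))) (st (st v))
        = mul (mul (mul (st v) (st (ebas \<sigma>))) (emb k)) (mul (ebas \<sigma>) v)"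
      by (simp add: st_st v(1) dmul_assoc)
    also have "\<dots> = emb k"
      by (simp add: st_mul[symmetric] ebas_Dset[OF s] v st_one one_left one_right emb_Dset)
    finally show ?thesis .
  qed
  ultimately show "k \<in> contr M" by (simp add: contr_def)
next
  fix k assume "k \<in> contr M"
  hence "mul (mul (st (ebas \<sigma>)) (emb k)) (st (st (ebas \<sigma>))) \<in> M"
    using MM_props(4)[OF M] st_Dset[OF ebas_Dset[OF s]] by (simp add: contr_def)
  thus "k \<in> Nsig G \<Phi> st (contr M) \<sigma>"
    by (simp add: st_st ebas_Dset[OF s] key5[OF s] Nsig_def contr_def)
qed

lemma contr_props: assumes M: "M \<in> MM G \<Phi> st"
  shows "0 \<in> contr M" "\<forall>a\<in>contr M. \<forall>b\<in>contr M. a + b \<in> contr M" "\<forall>a. \<forall>n\<in>contr M. kst st a * n * a \<in> contr M"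
proof -
  show "0 \<in> contr M" using MM_props(2)[OF M] by (simp add: contr_def emb_zero)
  show "\<forall>a\<in>contr M. \<forall>b\<in>contr M. a + b \<in> contr M" using MM_props(3)[OF M] by (simp add: contr_def emb_add)
  show "\<forall>a. \<forall>n\<in>contr M. kst st a * n * a \<in> contr M"
  proof (intro allI ballI)
    fix a n assume "n \<in> contr M"
    hence "mul (mul (emb (kst st a)) (emb n)) (st (emb (kst st a))) \<in> M"
      using MM_props(4)[OF M] emb_Dset by (simp add: contr_def)
    thus "kst st a * n * a \<in> contr M" by (simp add: st_emb kst_kst emb_emb contr_def)
  qed
qed

lemma contr_ext_contr: assumes M: "M \<in> MM G \<Phi> st" shows "contr (ext G \<Phi> st (contr M)) = contr M"
  using contr_ext[OF contr_props[OF M]] Nsig_contr[OF M] idG by auto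

end

theorem theorem4p2:
  fixes G :: "('k::field_char_0 \<Rightarrow> 'k) set"
    and \<Phi> :: "('k \<Rightarrow> 'k) \<Rightarrow> ('k \<Rightarrow> 'k) \<Rightarrow> 'k"
    and st :: "'k dvec \<Rightarrow> 'k dvec"
  assumes galois: "galois_group G"
    and cocycle: "normalized_cocycle G \<Phi>"
    and division: "division_algebra G \<Phi>"
    and invol: "involution G \<Phi> st"
    and K_stable: "\<forall>k. st (emb k) \<in> range emb"
    and a_in_K: "\<forall>\<sigma>\<in>G. dmul G \<Phi> (st (ebas \<sigma>)) (ebas \<sigma>) \<in> range emb"
    and NN_ne: "NN G \<Phi> st \<noteq> {}"
  shows "(\<forall>N\<in>NN G \<Phi> st.
            ext G \<Phi> st N = {u\<in>Dset G. \<forall>d\<in>Dset G. fD (dmul G \<Phi> (dmul G \<Phi> (st d) u) d) \<in> N}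
          \<and> contr (ext G \<Phi> st N) = (\<Inter>\<sigma>\<in>G. Nsig G \<Phi> st N \<sigma>)
          \<and> (\<forall>\<sigma>\<in>G. ext G \<Phi> st (Nsig G \<Phi> st N \<sigma>) = ext G \<Phi> st N)
          \<and> ext G \<Phi> st (contr (ext G \<Phi> st N)) = ext G \<Phi> st N)
       \<and> (\<forall>M\<in>MM G \<Phi> st.
            (\<forall>\<sigma>\<in>G. Nsig G \<Phi> st (contr M) \<sigma> = contr M)
          \<and> contr (ext G \<Phi> st (contr M)) = contr M)"
proof -
  interpret cp G \<Phi> st by (rule cp.intro[OF galois cocycle division invol K_stable a_in_K])
  have P1: "ext G \<Phi> st N = {u\<in>Dset G. \<forall>d\<in>Dset G. fD (dmul G \<Phi> (dmul G \<Phi> (st d) u) d) \<in> N}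
          \<and> contr (ext G \<Phi> st N) = (\<Inter>\<sigma>\<in>G. Nsig G \<Phi> st N \<sigma>)
          \<and> (\<forall>\<sigma>\<in>G. ext G \<Phi> st (Nsig G \<Phi> st N \<sigma>) = ext G \<Phi> st N)
          \<and> ext G \<Phi> st (contr (ext G \<Phi> st N)) = ext G \<Phi> st N" if N: "N \<in> NN G \<Phi> st" for N
  proof (intro conjI)
    show "ext G \<Phi> st N = {u\<in>Dset G. \<forall>d\<in>Dset G. fD (dmul G \<Phi> (dmul G \<Phi> (st d) u) d) \<in> N}"
      by (rule ext_char)
    show "contr (ext G \<Phi> st N) = (\<Inter>\<sigma>\<in>G. Nsig G \<Phi> st N \<sigma>)"
      by (rule contr_ext[OF NN_props[OF N]])
    show "\<forall>\<sigma>\<in>G. ext G \<Phi> st (Nsig G \<Phi> st N \<sigma>) = ext G \<Phi> st N"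
      using ext_Nsig[of _ N] by (rule ballI)
    show "ext G \<Phi> st (contr (ext G \<Phi> st N)) = ext G \<Phi> st N"
      by (rule ext_contr_ext[OF N])
  qed
  have P2: "(\<forall>\<sigma>\<in>G. Nsig G \<Phi> st (contr M) \<sigma> = contr M)
          \<and> contr (ext G \<Phi> st (contr M)) = contr M" if M: "M \<in> MM G \<Phi> st" for M
    using Nsig_contr[OF M] contr_ext_contr[OF M] by (intro conjI ballI)
  show ?thesis
    apply (rule conjI)
     apply (rule ballI, erule P1)
    apply (rule ballI, erule P2)
    done
qed

end
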